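(* Let $G$ be a graph with $m$ edges and $n$ vertices and let $t=\min\{m,\lceil \frac{n^2}{4}-\frac{n}{4}+\frac12\rceil\}$. Then $G$ is a $t$-interval-PCG.
   Context: All trees are unrooted with edges weighted by nonnegative reals; $d_T(u,v)$ is the weight of the path between leaves $u,v$ of $T$. A graph $G$ is a $k$-interval-PCG if there exist a tree $T$ whose leaf set is $V(G)$ and $k$ pairwise disjoint intervals $I_1,\ldots,I_k$ of nonnegative reals such that $\{u,v\}\in E(G)$ iff $d_T(u,v)\in I_i$ for some $i$. *)

theory Defs
  imports "HOL-Analysis.Analysis"
begin

definition simple_graph :: "'a set \<Rightarrow> 'a set set \<Rightarrow> bool" where
  "simple_graph V E \<longleftrightarrow> finite V \<and> V \<noteq> {} \<and>
     E \<subseteq> {{u, v} | u v. u \<in> V \<and> v \<in> V \<and> u \<noteq> v}"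

text \<open>Nodes of the tree have type 'a + nat: leaves are labelled by graph vertices (Inl),
  internal nodes may use the countably many extra labels (Inr).\<close>

definition is_tpath :: "'b set \<Rightarrow> 'b set set \<Rightarrow> 'b list \<Rightarrow> 'b \<Rightarrow> 'b \<Rightarrow> bool" where
  "is_tpath N TE p u v \<longleftrightarrow> p \<noteq> [] \<and> hd p = u \<and> last p = v \<and> distinct p \<and> set p \<subseteq> N \<and>
     (\<forall>i. Suc i < length p \<longrightarrow> {p ! i, p ! Suc i} \<in> TE)"

definition is_cycle :: "'b set set \<Rightarrow> 'b list \<Rightarrow> bool" where
  "is_cycle TE c \<longleftrightarrow> length c \<ge> 3 \<and> distinct c \<and>
     (\<forall>i. Suc i < length c \<longrightarrow> {c ! i, c ! Suc i} \<in> TE) \<and> {last c, hd c} \<in> TE"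

definition path_weight :: "('b set \<Rightarrow> real) \<Rightarrow> 'b list \<Rightarrow> real" where
  "path_weight w p = (\<Sum>i<length p - 1. w {p ! i, p ! Suc i})"

definition weighted_tree :: "'b set \<Rightarrow> 'b set set \<Rightarrow> ('b set \<Rightarrow> real) \<Rightarrow> bool" where
  "weighted_tree N TE w \<longleftrightarrow> finite N \<and> N \<noteq> {} \<and>
     TE \<subseteq> {{x, y} | x y. x \<in> N \<and> y \<in> N \<and> x \<noteq> y} \<and>
     (\<forall>u\<in>N. \<forall>v\<in>N. \<exists>p. is_tpath N TE p u v) \<and>
     (\<nexists>c. is_cycle TE c) \<and>
     (\<forall>e\<in>TE. w e \<ge> 0)"

definition tree_leaves :: "'b set \<Rightarrow> 'b set set \<Rightarrow> 'b set" where
  "tree_leaves N TE = {x \<in> N. card {e \<in> TE. x \<in> e} \<le> 1}"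

definition tree_dist :: "'b set \<Rightarrow> 'b set set \<Rightarrow> ('b set \<Rightarrow> real) \<Rightarrow> 'b \<Rightarrow> 'b \<Rightarrow> real" where
  "tree_dist N TE w u v = (THE d. \<exists>p. is_tpath N TE p u v \<and> d = path_weight w p)"

definition interval_PCG :: "nat \<Rightarrow> 'a set \<Rightarrow> 'a set set \<Rightarrow> bool" where
  "interval_PCG k V E \<longleftrightarrow>
     (\<exists>(N :: ('a + nat) set) TE w (Is :: nat \<Rightarrow> real set).
        weighted_tree N TE w \<and> tree_leaves N TE = Inl ` V \<and>
        (\<forall>i<k. is_interval (Is i) \<and> Is i \<noteq> {} \<and> Is i \<subseteq> {0..}) \<and>
        (\<forall>i<k. \<forall>j<k. i \<noteq> j \<longrightarrow> Is i \<inter> Is j = {}) \<and>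
        (\<forall>u\<in>V. \<forall>v\<in>V. u \<noteq> v \<longrightarrow>
           ({u, v} \<in> E \<longleftrightarrow> (\<exists>i<k. tree_dist N TE w (Inl u) (Inl v) \<in> Is i))))"

end

theory Submission
  imports Defs
begin


lemma pad_lemma:
  fixes J :: "nat \<Rightarrow> real set" and M :: real
  assumes M0: "0 \<le> M" and JM: "\<And>j. J j \<subseteq> {0..M}" and Jint: "\<And>j. is_interval (J j)"
    and Jdis: "\<And>i j. i \<noteq> j \<Longrightarrow> J i \<inter> J j = {}"
    and Is_def: "Is = (\<lambda>j. if J j = {} then {M + 1 + real j} else J j)"
  shows "(\<forall>i<k. is_interval (Is i) \<and> Is i \<noteq> {} \<and> Is i \<subseteq> {0..})"
    "(\<forall>i<k. \<forall>j<k. i\<noteq>j \<longrightarrow> Is i \<inter> Is j = {})"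
    "\<And>x j. x \<in> J j \<Longrightarrow> x \<in> Is j"
    "\<And>x j. x \<le> M \<Longrightarrow> x \<notin> J j \<Longrightarrow> x \<notin> Is j"
proof -
  have sing: "is_interval {c::real}" for c unfolding is_interval_1 by auto
  show "(\<forall>i<k. is_interval (Is i) \<and> Is i \<noteq> {} \<and> Is i \<subseteq> {0..})"
  proof (intro allI impI conjI)
    fix i :: nat show "is_interval (Is i)"
      using Jint[of i] sing[of "M + 1 + real i"] unfolding Is_def by simp
    show "Is i \<noteq> {}" unfolding Is_def by simp
    show "Is i \<subseteq> {0..}"
    proof (cases "J i = {}")
      case True then show ?thesis using M0 unfolding Is_def by simp
    next
      case False then show ?thesis using JM[of i] unfolding Is_def by auto
    qed
  qed
  show "(\<forall>i<k. \<forall>j<k. i\<noteq>j \<longrightarrow> Is i \<inter> Is j = {})"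
  proof (intro allI impI)
    fix i j :: nat assume ij: "i \<noteq> j"
    have outside: "M + 1 + real l \<notin> J l'" for l l' using JM[of l'] by auto
    show "Is i \<inter> Is j = {}"
    proof (cases "J i = {}"; cases "J j = {}")
      assume "J i = {}" "J j = {}" then show ?thesis using ij unfolding Is_def by simp
    next
      assume "J i = {}" "J j \<noteq> {}" then show ?thesis using outside[of i j] unfolding Is_def by simp
    next
      assume "J i \<noteq> {}" "J j = {}" then show ?thesis using outside[of j i] unfolding Is_def by simp
    next
      assume "J i \<noteq> {}" "J j \<noteq> {}" then show ?thesis using Jdis[OF ij] unfolding Is_def by simp
    qed
  qed
  show "\<And>x j. x \<in> J j \<Longrightarrow> x \<in> Is j" unfolding Is_def by auto
  show "\<And>x j. x \<le> M \<Longrightarrow> x \<notin> J j \<Longrightarrow> x \<notin> Is j" unfolding Is_def by auto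
qed

lemma intervals_exist:
  fixes A B :: "real set"
  assumes fA: "finite A" and fB: "finite B" and AB: "A \<inter> B = {}" and nn: "\<forall>x\<in>A\<union>B. 0 \<le> x"
    and kk: "card A \<le> k \<or> card B < k"
  shows "\<exists>Is::nat \<Rightarrow> real set. (\<forall>i<k. is_interval (Is i) \<and> Is i \<noteq> {} \<and> Is i \<subseteq> {0..}) \<and>
     (\<forall>i<k. \<forall>j<k. i\<noteq>j \<longrightarrow> Is i \<inter> Is j = {}) \<and> (\<forall>x\<in>A. \<exists>i<k. x \<in> Is i) \<and>
     (\<forall>x\<in>B. \<forall>i<k. x \<notin> Is i)"
proof -
  define M where "M = Max (insert 0 (A \<union> B))"
  have M0: "0 \<le> M" unfolding M_def using fA fB by auto
  have xM: "x \<le> M" if "x \<in> A \<union> B" for x unfolding M_def using fA fB that by auto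
  show ?thesis
  proof (cases "card A \<le> k")
    case True
    define J where "J = (\<lambda>j. {x\<in>A. card {a\<in>A. a < x} = j})"
    have JM: "\<And>j. J j \<subseteq> {0..M}" using nn xM unfolding J_def by auto
    have Jint: "is_interval (J j)" for j
      unfolding is_interval_1
    proof (intro ballI allI impI)
      fix a b x assume a: "a \<in> J j" and b: "b \<in> J j" and x: "a \<le> x \<and> x \<le> b"
      have "\<not> a < b"
      proof
        assume ab: "a < b"
        have "{a'\<in>A. a' < a} \<subset> {a'\<in>A. a' < b}" using a ab unfolding J_def by auto
        then have "card {a'\<in>A. a' < a} < card {a'\<in>A. a' < b}"
          by (intro psubset_card_mono) (use fA in auto)
        then show False using a b unfolding J_def by auto
      qed
      then have "x = a" using x by linarith
      then show "x \<in> J j" using a by simp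
    qed
    have Jdis: "\<And>i j. i \<noteq> j \<Longrightarrow> J i \<inter> J j = {}" unfolding J_def by auto
    define Is where "Is = (\<lambda>j. if J j = {} then {M + 1 + real j} else J j)"
    note P = pad_lemma[OF M0 JM Jint Jdis Is_def]
    show ?thesis
    proof (intro exI[of _ Is] conjI P(1,2) ballI)
      fix x assume x: "x \<in> A"
      have "{a\<in>A. a < x} \<subset> A" using x by auto
      then have "card {a\<in>A. a < x} < card A" by (intro psubset_card_mono fA)
      then show "\<exists>i<k. x \<in> Is i" using True x by (intro exI[of _ "card {a\<in>A. a < x}"] conjI P(3)) (auto simp: J_def)
    next
      fix x assume x: "x \<in> B"
      show "\<forall>i<k. x \<notin> Is i" using x AB xM by (intro allI impI P(4)) (auto simp: J_def)
    qed
  next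
    case False
    with kk have kB: "card B < k" by auto
    define S where "S = (\<lambda>x. {b\<in>B. b < x})"
    define J where "J = (\<lambda>j. {x. 0 \<le> x \<and> x \<le> M \<and> x \<notin> B \<and> card (S x) = j})"
    have JM: "\<And>j. J j \<subseteq> {0..M}" unfolding J_def by auto
    have Jint: "is_interval (J j)" for j
      unfolding is_interval_1
    proof (intro ballI allI impI)
      fix a b x assume a: "a \<in> J j" and b: "b \<in> J j" and x: "a \<le> x \<and> x \<le> b"
      have s1: "S a \<subseteq> S x" "S x \<subseteq> S b" using x unfolding S_def by auto
      have fS: "finite (S y)" for y unfolding S_def using fB by auto
      have ca: "card (S a) = j" and cb: "card (S b) = j" and aB: "a \<notin> B" and bB: "b \<notin> B"
        and a0: "0 \<le> a" and bM: "b \<le> M"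
        using a b unfolding J_def by auto
      have "S a = S b" using card_subset_eq[OF fS[of b], of "S a"] s1 ca cb by simp
      then have e: "S a = S x" "S x = S b" using s1 by auto
      have "x \<notin> B"
      proof
        assume xB: "x \<in> B"
        have "x \<noteq> b" using bB xB by metis
        then have "x < b" using x by simp
        then have "x \<in> S b" using xB unfolding S_def by simp
        then have "x \<in> S a" using e by simp
        then show False using x unfolding S_def by simp
      qed
      moreover have "card (S x) = j" using e ca by simp
      ultimately show "x \<in> J j" using a0 bM x unfolding J_def by simp
    qed
    have Jdis: "\<And>i j. i \<noteq> j \<Longrightarrow> J i \<inter> J j = {}" unfolding J_def by auto
    define Is where "Is = (\<lambda>j. if J j = {} then {M + 1 + real j} else J j)"
    note P = pad_lemma[OF M0 JM Jint Jdis Is_def]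
    show ?thesis
    proof (intro exI[of _ Is] conjI P(1,2) ballI)
      fix x assume x: "x \<in> A"
      have "card (S x) \<le> card B" unfolding S_def by (intro card_mono fB) auto
      have "x \<notin> B" using x AB by auto
      moreover have "0 \<le> x" using nn x by simp
      moreover have "x \<le> M" using xM x by simp
      ultimately have "x \<in> J (card (S x))" unfolding J_def by simp
      then have "x \<in> Is (card (S x))" using P(3)[of x "card (S x)"] by simp
      moreover have "card (S x) < k" using kB \<open>card (S x) \<le> card B\<close> by simp
      ultimately show "\<exists>i<k. x \<in> Is i" by blast
    next
      fix x assume x: "x \<in> B"
      have "x \<le> M" using xM x by simp
      moreover have "x \<notin> J i" for i using x unfolding J_def by simp
      ultimately show "\<forall>i<k. x \<notin> Is i" using P(4) by blast
    qed
  qed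
qed



definition star_TE :: "'a set \<Rightarrow> ('a + nat) set set" where
  "star_TE V = (\<lambda>v. {Inl v, Inr 0}) ` V"

lemma star_edge: "{a, b} \<in> star_TE V \<Longrightarrow> (a = Inr 0 \<and> b \<noteq> Inr 0) \<or> (b = Inr 0 \<and> a \<noteq> Inr 0)"
proof -
  assume "{a, b} \<in> star_TE V"
  then obtain x where "{a, b} = {Inl x, Inr 0}" unfolding star_TE_def by blast
  then have "(a = Inl x \<and> b = Inr 0) \<or> (a = Inr 0 \<and> b = Inl x)" by (simp add: doubleton_eq_iff)
  then show ?thesis by blast
qed

lemma tpath2:
  assumes "a \<noteq> b" "a \<in> N" "b \<in> N" "{a, b} \<in> TE"
  shows "is_tpath N TE [a, b] a b"
  unfolding is_tpath_def
proof (intro conjI allI impI)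
  fix i assume "Suc i < length [a, b]"
  then have "i = 0" by simp
  then show "{[a, b] ! i, [a, b] ! Suc i} \<in> TE" using assms by simp
qed (use assms in auto)

lemma tpath3:
  assumes "a \<noteq> b" "b \<noteq> c" "a \<noteq> c" "a \<in> N" "b \<in> N" "c \<in> N" "{a, b} \<in> TE" "{b, c} \<in> TE"
  shows "is_tpath N TE [a, b, c] a c"
  unfolding is_tpath_def
proof (intro conjI allI impI)
  fix i assume "Suc i < length [a, b, c]"
  then have "i = 0 \<or> i = 1" by auto
  then show "{[a, b, c] ! i, [a, b, c] ! Suc i} \<in> TE" using assms by auto
qed (use assms in auto)

lemma star_TE_mem: "v \<in> V \<Longrightarrow> {Inl v, Inr 0} \<in> star_TE V" "v \<in> V \<Longrightarrow> {Inr 0, Inl v} \<in> star_TE V"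
  unfolding star_TE_def by (auto simp: insert_commute)

lemma star_tree:
  assumes "finite V" and hnn: "\<And>x. h x \<ge> 0"
  shows "weighted_tree (insert (Inr 0) (Inl ` V)) (star_TE V) (\<lambda>e. sum h e)"
proof -
  let ?N = "insert (Inr 0) (Inl ` V)"
  have paths: "\<exists>p. is_tpath ?N (star_TE V) p u v" if uN: "u \<in> ?N" and vN: "v \<in> ?N" for u v
  proof (cases "u = v")
    case True then show ?thesis using uN by (intro exI[of _ "[u]"]) (auto simp: is_tpath_def)
  next
    case False
    show ?thesis
    proof (cases "u = Inr 0")
      case True
      then obtain b where "v = Inl b" "b \<in> V" using False uN vN by auto
      then show ?thesis using True
        by (intro exI[of _ "[u, v]"] tpath2) (auto intro: star_TE_mem)
    next
      case u: False
      then obtain a where a: "u = Inl a" "a \<in> V" using uN vN by auto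
      show ?thesis
      proof (cases "v = Inr 0")
        case True
        then show ?thesis using a
          by (intro exI[of _ "[u, v]"] tpath2) (auto intro: star_TE_mem)
      next
        case False
        then obtain b where "v = Inl b" "b \<in> V" using uN vN by auto
        then show ?thesis using a \<open>u \<noteq> v\<close>
          by (intro exI[of _ "[u, Inr 0, v]"] tpath3) (auto intro: star_TE_mem)
      qed
    qed
  qed
  have nocyc: "\<not> is_cycle (star_TE V) c" for c
  proof
    assume c: "is_cycle (star_TE V) c"
    then have len: "length c \<ge> 3" and d: "distinct c"
      and ed: "\<And>i. Suc i < length c \<Longrightarrow> {c ! i, c ! Suc i} \<in> star_TE V"
      and cl: "{last c, hd c} \<in> star_TE V" unfolding is_cycle_def by auto
    have e0: "{c!0, c!1} \<in> star_TE V" using ed[of 0] len by auto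
    have e1: "{c!1, c!2} \<in> star_TE V" 
    proof -
      have "Suc 1 < length c" using len by simp
      from ed[OF this] show ?thesis by (simp add: numeral_2_eq_2)
    qed
    have n02: "c!0 \<noteq> c!2" by (subst nth_eq_iff_index_eq[OF d]) (use len in auto)
    have c1: "c!1 = Inr 0" using star_edge[OF e0] star_edge[OF e1] n02 by auto
    have cne: "c \<noteq> []" using len by auto
    have hd: "hd c = c!0" using cne by (rule hd_conv_nth)
    have lst: "last c = c!(length c - 1)" using cne by (rule last_conv_nth)
    have "c!0 \<noteq> c!1" by (subst nth_eq_iff_index_eq[OF d]) (use len in auto)
    moreover have "c!(length c - 1) \<noteq> c!1" by (subst nth_eq_iff_index_eq[OF d]) (use len in auto)
    ultimately show False using star_edge[OF cl] c1 hd lst by auto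
  qed
  show ?thesis unfolding weighted_tree_def
  proof (intro conjI ballI)
    show "finite ?N" using assms by auto
    show "?N \<noteq> {}" by auto
    show "star_TE V \<subseteq> {{x, y} |x y. x \<in> ?N \<and> y \<in> ?N \<and> x \<noteq> y}" unfolding star_TE_def by auto
    show "\<nexists>c. is_cycle (star_TE V) c" using nocyc by auto
    show "\<And>e. e \<in> star_TE V \<Longrightarrow> 0 \<le> sum h e" using hnn by (intro sum_nonneg) auto
    show "\<And>u v. u \<in> ?N \<Longrightarrow> v \<in> ?N \<Longrightarrow> \<exists>p. is_tpath ?N (star_TE V) p u v" by (rule paths)
  qed
qed

lemma star_leaves:
  assumes "finite V" "card V \<ge> 2"
  shows "tree_leaves (insert (Inr 0) (Inl ` V)) (star_TE V) = Inl ` V"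
proof -
  have "card {e \<in> star_TE V. Inr 0 \<in> e} = card V"
  proof -
    have "{e \<in> star_TE V. Inr 0 \<in> e} = (\<lambda>v. {Inl v, Inr 0}) ` V" unfolding star_TE_def by auto
    moreover have "inj_on (\<lambda>v. {Inl v, Inr (0::nat)}) V" by (auto simp: inj_on_def doubleton_eq_iff)
    ultimately show ?thesis by (simp add: card_image)
  qed
  moreover have "{e \<in> star_TE V. Inl v \<in> e} = {{Inl v, Inr 0}}" if "v \<in> V" for v
    using that unfolding star_TE_def by auto
  ultimately show ?thesis using assms unfolding tree_leaves_def
  proof (intro equalityI subsetI)
    fix x :: "'a + nat" assume c0: "card {e \<in> star_TE V. Inr 0 \<in> e} = card V"
      and c1: "\<And>v. v \<in> V \<Longrightarrow> {e \<in> star_TE V. Inl v \<in> e} = {{Inl v, Inr 0}}"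
      and x: "x \<in> {x \<in> insert (Inr 0) (Inl ` V). card {e \<in> star_TE V. x \<in> e} \<le> 1}"
    show "x \<in> Inl ` V"
    proof (cases "x = Inr 0")
      case True
      have "card {e \<in> star_TE V. x \<in> e} \<le> 1" using x by (simp only: mem_Collect_eq)
      then have "card {e \<in> star_TE V. Inr 0 \<in> e} \<le> 1" unfolding True .
      then have "card V \<le> 1" using c0 by linarith
      then show ?thesis using assms(2) by simp
    next
      case False
      have "x \<in> insert (Inr 0) (Inl ` V)" using x by (simp only: mem_Collect_eq)
      then show ?thesis using False by blast
    qed
  next
    fix x :: "'a + nat" assume c1: "\<And>v. v \<in> V \<Longrightarrow> {e \<in> star_TE V. Inl v \<in> e} = {{Inl v, Inr 0}}"
      and x: "x \<in> Inl ` V"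
    then obtain v where v: "v \<in> V" "x = (Inl v :: 'a + nat)" by auto
    show "x \<in> {x \<in> insert (Inr 0) (Inl ` V). card {e \<in> star_TE V. x \<in> e} \<le> 1}"
    proof (rule CollectI, rule conjI)
      show "x \<in> insert (Inr 0) (Inl ` V)" using v by blast
      have "{e \<in> star_TE V. x \<in> e} = {{Inl v, Inr 0}}" using c1[OF v(1)] unfolding v(2) .
      then show "card {e \<in> star_TE V. x \<in> e} \<le> 1" by simp
    qed
  qed
qed

lemma star_path_unique:
  assumes "u \<noteq> v" and p: "is_tpath N (star_TE V) p (Inl u) (Inl v)"
  shows "length p = 3 \<and> p!0 = Inl u \<and> p!1 = Inr 0 \<and> p!2 = Inl v"
proof -
  from p have ne: "p \<noteq> []" and hd: "hd p = Inl u" and lst: "last p = Inl v" and d: "distinct p"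
    and ed: "\<And>i. Suc i < length p \<Longrightarrow> {p ! i, p ! Suc i} \<in> star_TE V"
    unfolding is_tpath_def by auto
  have p0: "p!0 = Inl u" using hd ne by (simp add: hd_conv_nth)
  have pl: "p!(length p - 1) = Inl v" using lst ne by (simp add: last_conv_nth)
  have l2: "length p \<ge> 2"
  proof (rule ccontr)
    assume "\<not> length p \<ge> 2"
    moreover have "length p \<noteq> 0" using ne by simp
    ultimately have "length p = 1" by linarith
    then show False using p0 pl assms by auto
  qed
  have p1: "p!1 = Inr 0" using star_edge[OF ed[of 0]] l2 p0 by auto
  have l3: "length p \<ge> 3"
  proof (rule ccontr)
    assume "\<not> length p \<ge> 3"
    then have "length p = 2" using l2 by auto
    then show False using p1 pl by auto
  qed
  have "p!2 \<noteq> p!1" by (subst nth_eq_iff_index_eq[OF d]) (use l3 in auto)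
  then have p2: "p!2 \<noteq> Inr 0" using p1 by simp
  have l: "length p = 3"
  proof (rule ccontr)
    assume "length p \<noteq> 3"
    then have "3 < length p" using l3 by auto
    then have "{p!2, p!3} \<in> star_TE V" using ed[of 2] by simp
    then have "p!3 = Inr 0" using p2 star_edge by blast
    moreover have "p!3 \<noteq> p!1" by (subst nth_eq_iff_index_eq[OF d]) (use \<open>3 < length p\<close> in auto)
    ultimately show False using p1 by auto
  qed
  then show ?thesis using p0 p1 pl by auto
qed

lemma star_dist:
  assumes "u \<in> V" "v \<in> V" "u \<noteq> v"
  shows "tree_dist (insert (Inr 0) (Inl ` V)) (star_TE V) (\<lambda>e. sum h e) (Inl u) (Inl v)
         = h (Inl u) + h (Inl v) + 2 * h (Inr 0)"
proof -
  let ?N = "insert (Inr 0) (Inl ` V)"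
  have pw: "path_weight (\<lambda>e. sum h e) p = h (Inl u) + h (Inl v) + 2 * h (Inr 0)"
    if "is_tpath ?N (star_TE V) p (Inl u) (Inl v)" for p
  proof -
    have "length p = 3 \<and> p!0 = Inl u \<and> p!1 = Inr 0 \<and> p!2 = Inl v"
      using star_path_unique[OF assms(3) that] .
    then have l3: "length p - 1 = Suc (Suc 0)" and q: "p!0 = Inl u" "p!Suc 0 = Inr 0" "p!Suc (Suc 0) = Inl v"
      by (simp_all add: numeral_2_eq_2)
    have "path_weight (\<lambda>e. sum h e) p = (\<Sum>i<Suc (Suc 0). sum h {p ! i, p ! Suc i})"
      unfolding path_weight_def l3 ..
    also have "\<dots> = sum h {p!0, p!Suc 0} + sum h {p!Suc 0, p!Suc (Suc 0)}"
      by (simp only: sum.lessThan_Suc lessThan_0 sum.empty)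
    also have "\<dots> = h (Inl u) + h (Inl v) + 2 * h (Inr 0)"
      unfolding q by simp
    finally show ?thesis .
  qed
  have ex: "is_tpath ?N (star_TE V) [Inl u, Inr 0, Inl v] (Inl u) (Inl v)"
    using assms by (intro tpath3) (auto intro: star_TE_mem)
  show ?thesis unfolding tree_dist_def
  proof (rule the_equality)
    show "\<exists>p. is_tpath ?N (star_TE V) p (Inl u) (Inl v) \<and>
        h (Inl u) + h (Inl v) + 2 * h (Inr 0) = path_weight (\<lambda>e. sum h e) p"
      by (intro exI[of _ "[Inl u, Inr 0, Inl v]"] conjI ex pw[OF ex, symmetric])
  next
    fix d assume "\<exists>p. is_tpath ?N (star_TE V) p (Inl u) (Inl v) \<and> d = path_weight (\<lambda>e. sum h e) p"
    then show "d = h (Inl u) + h (Inl v) + 2 * h (Inr 0)" using pw by auto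
  qed
qed



lemma pow2_inj_ord:
  fixes a b c d :: nat
  assumes "a < b" "c < d" "(2::nat)^a + 2^b = 2^c + 2^d"
  shows "a = c \<and> b = d"
proof -
  have bd: "\<not> b < d" if "a < b" "c < d" "(2::nat)^a + 2^b = 2^c + 2^d" for a b c d :: nat
  proof
    assume "b < d"
    have "(2::nat)^a < 2^b" using that(1) by simp
    then have "(2::nat)^a + 2^b < 2^Suc b" by simp
    also have "(2::nat)^Suc b \<le> 2^d" using \<open>b < d\<close> by (intro power_increasing) auto
    also have "(2::nat)^d \<le> 2^c + 2^d" by simp
    finally show False using that(3) by simp
  qed
  have "b = d" using bd[OF assms] bd[OF assms(2,1) assms(3)[symmetric]] by simp
  then have "(2::nat)^a = 2^c" using assms(3) by simp
  then have "a = c" by simp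
  then show ?thesis using \<open>b = d\<close> by simp
qed

lemma pow2_inj_real:
  fixes a b c d :: nat
  assumes "a < b" "c < d" "(2::real)^a + 2^b = 2^c + 2^d"
  shows "a = c \<and> b = d"
proof -
  have "real ((2::nat)^a + 2^b) = real ((2::nat)^c + 2^d)" using assms(3) by simp
  then have "(2::nat)^a + 2^b = 2^c + 2^d" by (simp only: of_nat_eq_iff)
  then show ?thesis using pow2_inj_ord assms(1,2) by blast
qed

lemma pair_ord:
  fixes f :: "'a \<Rightarrow> nat"
  assumes inj: "inj_on f V" and e: "e \<subseteq> V" "card e = 2"
  obtains a b where "e = {a, b}" "a \<in> V" "b \<in> V" "f a < f b"
proof -
  obtain x y where xy: "e = {x, y}" "x \<noteq> y" using e(2) card_2_iff by metis
  then have V: "x \<in> V" "y \<in> V" using e(1) by auto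
  then have "f x \<noteq> f y" using inj xy(2) by (auto dest: inj_onD)
  then show ?thesis
  proof (cases "f x < f y")
    case True then show ?thesis using that xy V by blast
  next
    case False then have "f y < f x" using \<open>f x \<noteq> f y\<close> by simp
    then show ?thesis using that[of y x] xy V by (simp add: insert_commute)
  qed
qed

lemma D_inj:
  fixes f :: "'a \<Rightarrow> nat"
  assumes inj: "inj_on f V"
  shows "inj_on (\<lambda>e. \<Sum>v\<in>e. (2::real)^(f v)) {e. e \<subseteq> V \<and> card e = 2}"
proof (rule inj_onI)
  fix e1 e2 assume e1: "e1 \<in> {e. e \<subseteq> V \<and> card e = 2}" and e2: "e2 \<in> {e. e \<subseteq> V \<and> card e = 2}"
    and eq: "(\<Sum>v\<in>e1. (2::real)^(f v)) = (\<Sum>v\<in>e2. (2::real)^(f v))"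
  obtain a b where ab: "e1 = {a, b}" "a \<in> V" "b \<in> V" "f a < f b"
    using pair_ord[OF inj] e1 by blast
  obtain c d where cd: "e2 = {c, d}" "c \<in> V" "d \<in> V" "f c < f d"
    using pair_ord[OF inj] e2 by blast
  have "a \<noteq> b" "c \<noteq> d" using ab(4) cd(4) by auto
  then have "(2::real)^(f a) + 2^(f b) = 2^(f c) + 2^(f d)" using eq ab(1) cd(1) by simp
  then have "f a = f c \<and> f b = f d" using pow2_inj_real ab(4) cd(4) by blast
  then have "a = c" "b = d" using inj ab(2,3) cd(2,3) by (auto dest: inj_onD)
  then show "e1 = e2" using ab(1) cd(1) by simp
qed



lemma singleton_case:
  assumes "V = {a}" "E = {}"
  shows "interval_PCG 0 V E"
  unfolding interval_PCG_def
proof (intro exI conjI)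
  let ?N = "{Inl a} :: ('a + nat) set"
  show "weighted_tree ?N {} (\<lambda>_. 0)" unfolding weighted_tree_def
  proof (intro conjI ballI)
    fix u v assume "u \<in> ?N" "v \<in> ?N"
    then show "\<exists>p. is_tpath ?N {} p u v" by (intro exI[of _ "[u]"]) (auto simp: is_tpath_def)
  qed (auto simp: is_cycle_def)
  show "tree_leaves ?N {} = Inl ` V" using assms unfolding tree_leaves_def by auto
  show "\<forall>i<(0::nat). is_interval ((\<lambda>_. {}::real set) i) \<and> (\<lambda>_. {}::real set) i \<noteq> {} \<and> (\<lambda>_. {}::real set) i \<subseteq> {0..}" by simp
  show "\<forall>i<0. \<forall>j<0. i \<noteq> j \<longrightarrow> (\<lambda>_::nat. {}::real set) i \<inter> (\<lambda>_. {}) j = {}" by simp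
  show "\<forall>u\<in>V. \<forall>v\<in>V. u \<noteq> v \<longrightarrow>
      ({u, v} \<in> E \<longleftrightarrow> (\<exists>i<0. tree_dist ?N {} (\<lambda>_. 0) (Inl u) (Inl v) \<in> (\<lambda>_. {}) i))"
    using assms by simp
qed

theorem theorem3:
  fixes V :: "'a set" and E :: "'a set set"
  assumes "simple_graph V E"
  shows "interval_PCG
           (min (card E) (nat \<lceil>real (card V) ^ 2 / 4 - real (card V) / 4 + 1 / 2\<rceil>)) V E"
proof -
  from assms have fV: "finite V" and Vne: "V \<noteq> {}"
    and Esub: "E \<subseteq> {{u, v} | u v. u \<in> V \<and> v \<in> V \<and> u \<noteq> v}"
    unfolding simple_graph_def by auto
  define n where "n = card V"
  define c where "c = nat \<lceil>real n ^ 2 / 4 - real n / 4 + 1 / 2\<rceil>"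
  define m where "m = card E"
  define k where "k = min m c"
  have n1: "n \<ge> 1" using fV Vne unfolding n_def by (simp add: Suc_le_eq card_gt_0_iff)
  show ?thesis
  proof (cases "n = 1")
    case True
    then obtain a where a: "V = {a}" unfolding n_def using card_1_singletonE by blast
    then have "E = {}" using Esub by auto
    then show ?thesis using singleton_case[OF a] by simp
  next
    case False
    then have n2: "n \<ge> 2" using n1 by simp
    obtain f :: "'a \<Rightarrow> nat" where inj: "inj_on f V"
      using finite_imp_inj_to_nat_seg[OF fV] by blast
    define h where "h = (\<lambda>x::'a + nat. case x of Inl v \<Rightarrow> (2::real)^(f v) | Inr _ \<Rightarrow> 0)"
    define N where "N = insert (Inr 0) (Inl ` V :: ('a + nat) set)"
    define D where "D = (\<lambda>e. \<Sum>v\<in>e. (2::real)^(f v))"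
    define P where "P = {e. e \<subseteq> V \<and> card e = 2}"
    define A where "A = D ` E"
    define B where "B = D ` (P - E)"
    have hnn: "\<And>x. h x \<ge> 0" unfolding h_def by (auto split: sum.splits)
    have tree: "weighted_tree N (star_TE V) (\<lambda>e. sum h e)"
      unfolding N_def by (rule star_tree[OF fV hnn])
    have leaves: "tree_leaves N (star_TE V) = Inl ` V"
      unfolding N_def using star_leaves[OF fV] n2 n_def by simp
    have dist: "tree_dist N (star_TE V) (\<lambda>e. sum h e) (Inl u) (Inl v) = D {u, v}"
      if "u \<in> V" "v \<in> V" "u \<noteq> v" for u v
      using star_dist[OF that, of h] that(3) unfolding N_def D_def h_def by simp
    have EP: "E \<subseteq> P"
    proof
      fix e assume "e \<in> E"
      then obtain u v where "e = {u, v}" "u \<in> V" "v \<in> V" "u \<noteq> v" using Esub by blast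
      then show "e \<in> P" unfolding P_def by simp
    qed
    have fP: "finite P" unfolding P_def using fV by simp
    have injD: "inj_on D P" unfolding D_def P_def by (rule D_inj[OF inj])
    have AB: "A \<inter> B = {}" unfolding A_def B_def using injD EP
      by (auto dest: inj_onD)
    have fA: "finite A" "finite B" unfolding A_def B_def using fP EP finite_subset by auto
    have nn: "\<forall>x\<in>A \<union> B. 0 \<le> x" unfolding A_def B_def D_def by (auto intro: sum_nonneg)
    have cA: "card A \<le> m" unfolding A_def m_def by (rule card_image_le) (use fP EP finite_subset in auto)
    have cB: "card B \<le> card P - m" unfolding B_def m_def
      using card_image_le[of "P - E" D] card_Diff_subset[of E P] fP EP finite_subset by fastforce
    have cP: "card P = n * (n - 1) div 2" unfolding P_def n_def
      using n_subsets[OF fV, of 2] by (simp add: choose_two)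
    have mP: "m \<le> card P" unfolding m_def using card_mono[OF fP EP] .
    have kk: "card A \<le> k \<or> card B < k"
    proof (cases "m \<le> c")
      case True then show ?thesis using cA unfolding k_def by simp
    next
      case False
      then have "c \<le> m" by linarith
      then have kc: "k = c" unfolding k_def by (rule min_absorb2)
      have "real n * 1 \<le> real n * real n" using n1 by (intro mult_left_mono) auto
      then have sq: "real n \<le> real n ^ 2" by (simp add: power2_eq_square)
      have pos: "real n ^ 2 / 4 - real n / 4 + 1 / 2 > 0" using sq by linarith
      have rc: "real c \<ge> real n ^ 2 / 4 - real n / 4 + 1 / 2" unfolding c_def
        using pos by linarith
      have "real m \<ge> real c + 1" using False by simp
      have "even (n * (n - 1))"
      proof (cases n)
        case 0 then show ?thesis by simp
      next
        case (Suc j) then show ?thesis by simp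
      qed
      then have ev: "2 * (n * (n - 1) div 2) = n * (n - 1)" by simp
      have "real (2 * (n * (n - 1) div 2)) = real n ^ 2 - real n"
        unfolding ev using n1 by (simp add: power2_eq_square of_nat_diff algebra_simps)
      then have rT: "2 * real (card P) = real n ^ 2 - real n" unfolding cP by simp
      have "real (card B) \<le> real (card P) - real m" using cB mP by (simp add: of_nat_diff)
      then have "real (card B) < real c" using rT rc \<open>real m \<ge> real c + 1\<close> by linarith
      then show ?thesis unfolding kc by simp
    qed
    obtain Is where Is: "\<forall>i<k. is_interval (Is i) \<and> Is i \<noteq> {} \<and> Is i \<subseteq> {0..}"
      "\<forall>i<k. \<forall>j<k. i\<noteq>j \<longrightarrow> Is i \<inter> Is j = {}" "\<forall>x\<in>A. \<exists>i<k. x \<in> Is i"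
      "\<forall>x\<in>B. \<forall>i<k. x \<notin> Is i"
      using intervals_exist[OF fA AB nn kk] by blast
    have main: "\<forall>u\<in>V. \<forall>v\<in>V. u \<noteq> v \<longrightarrow>
           ({u, v} \<in> E \<longleftrightarrow> (\<exists>i<k. tree_dist N (star_TE V) (\<lambda>e. sum h e) (Inl u) (Inl v) \<in> Is i))"
    proof (intro ballI impI)
      fix u v assume uv: "u \<in> V" "v \<in> V" "u \<noteq> v"
      have inP: "{u, v} \<in> P" unfolding P_def using uv by auto
      show "{u, v} \<in> E \<longleftrightarrow> (\<exists>i<k. tree_dist N (star_TE V) (\<lambda>e. sum h e) (Inl u) (Inl v) \<in> Is i)"
      proof
        assume "{u, v} \<in> E"
        then have "D {u, v} \<in> A" unfolding A_def by blast
        then show "\<exists>i<k. tree_dist N (star_TE V) (\<lambda>e. sum h e) (Inl u) (Inl v) \<in> Is i"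
          using Is(3) dist[OF uv] by simp
      next
        assume ex: "\<exists>i<k. tree_dist N (star_TE V) (\<lambda>e. sum h e) (Inl u) (Inl v) \<in> Is i"
        show "{u, v} \<in> E"
        proof (rule ccontr)
          assume "{u, v} \<notin> E"
          then have "D {u, v} \<in> B" unfolding B_def using inP by blast
          then show False using Is(4) ex dist[OF uv] by auto
        qed
      qed
    qed
    have "interval_PCG k V E" unfolding interval_PCG_def
      using tree leaves Is(1,2) main by blast
    then show ?thesis unfolding k_def m_def c_def n_def .
  qed
qed

end
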